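(* Let $X$ and $Y$ be independent random variables, each with the unit Fréchet distribution $F(x)=e^{-1/x}$, $x>0$, and let $(X_i,Y_i)$, $i=1,\dots,n$, be a random sample (i.i.d. copies) of $(X,Y)$. Then $$\lim_{n\to\infty}\mathbb{P}\Big\{n^{-1}\Big(\max_{i\le n}Y_i/X_i+1\Big)\le x\Big\}=e^{-1/x},\qquad x>0,$$ and the random variables $\max_{i\le n}Y_i/X_i$ and $\min_{i\le n}Y_i/X_i$ are asymptotically independent, in the sense that for all $x,y>0$, $$\lim_{n\to\infty}\mathbb{P}\Big\{n^{-1}\Big(\max_{i\le n}Y_i/X_i+1\Big)\le x,\ n^{-1}\Big(\max_{i\le n}X_i/Y_i+1\Big)\le y\Big\}=e^{-1/x-1/y}.$$ Furthermore, $n q_n$ converges in distribution, as $n\to\infty$, to a gamma$(2,1)$ random variable (density $t e^{-t}$, $t>0$), where $$q_n=\frac{\max_{i\le n}\{Y_i/X_i\}+\max_{i\le n}\{X_i/Y_i\}-2}{\max_{i\le n}\{Y_i/X_i\}\times\max_{i\le n}\{X_i/Y_i\}-1}.$$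
   Context: The quantity $q_n$ is called the quotient correlation coefficient of the sample $(X_i,Y_i)_{i\le n}$ of positive random variables. *)

theory Defs
  imports "HOL-Probability.Probability"
begin

definition frechet_cdf :: "real \<Rightarrow> real" where
  "frechet_cdf x = (if x > 0 then exp (- 1 / x) else 0)"

definition gamma21_density :: "real \<Rightarrow> real" where
  "gamma21_density t = (if t > 0 then t * exp (- t) else 0)"

definition gamma21 :: "real measure" where
  "gamma21 = density lborel (\<lambda>t. ennreal (gamma21_density t))"

definition max_ratio :: "(nat \<Rightarrow> 'a \<Rightarrow> real) \<Rightarrow> (nat \<Rightarrow> 'a \<Rightarrow> real) \<Rightarrow> nat \<Rightarrow> 'a \<Rightarrow> real" where
  "max_ratio A B n \<omega> = Max ((\<lambda>i. A i \<omega> / B i \<omega>) ` {..<n})"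

definition quot_corr :: "(nat \<Rightarrow> 'a \<Rightarrow> real) \<Rightarrow> (nat \<Rightarrow> 'a \<Rightarrow> real) \<Rightarrow> nat \<Rightarrow> 'a \<Rightarrow> real" where
  "quot_corr X Y n \<omega> =
     (max_ratio Y X n \<omega> + max_ratio X Y n \<omega> - 2) /
     (max_ratio Y X n \<omega> * max_ratio X Y n \<omega> - 1)"

end

theory Submission
  imports Defs
begin

lemma pow_lim:
  fixes a :: "nat \<Rightarrow> real"
  assumes L: "(\<lambda>n. real n * (a n - 1)) \<longlonglongrightarrow> L"
  shows "(\<lambda>n. a n ^ n) \<longlonglongrightarrow> exp L"
proof -
  have a1: "(\<lambda>n. a n - 1) \<longlonglongrightarrow> 0"
  proof -
    have "(\<lambda>n. real n * (a n - 1) * inverse (real n)) \<longlonglongrightarrow> L * 0"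
      by (intro tendsto_mult L lim_inverse_n)
    moreover have "eventually (\<lambda>n. real n * (a n - 1) * inverse (real n) = a n - 1) sequentially"
      using eventually_gt_at_top[of 0] by eventually_elim auto
    ultimately show ?thesis by (simp add: tendsto_cong)
  qed
  then have a2: "a \<longlonglongrightarrow> 1"
    using tendsto_add[OF a1 tendsto_const[of 1]] by simp
  then have ev: "eventually (\<lambda>n. a n > 0) sequentially"
    by (rule order_tendstoD) simp
  have lo: "(\<lambda>n. real n * (a n - 1) / a n) \<longlonglongrightarrow> L / 1"
    by (intro tendsto_divide L a2) simp
  have "(\<lambda>n. real n * ln (a n)) \<longlonglongrightarrow> L"
  proof (rule tendsto_sandwich[OF _ _ lo[simplified] L])
    show "eventually (\<lambda>n. real n * (a n - 1) / a n \<le> real n * ln (a n)) sequentially"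
      using ev
    proof eventually_elim
      case (elim n)
      have "ln (inverse (a n)) \<le> inverse (a n) - 1" using elim by (intro ln_le_minus_one) auto
      then have "1 - inverse (a n) \<le> ln (a n)" using elim by (simp add: ln_inverse)
      moreover have "(a n - 1) / a n = 1 - inverse (a n)" using elim by (simp add: field_simps)
      ultimately have "real n * ((a n - 1) / a n) \<le> real n * ln (a n)" by (simp add: mult_left_mono)
      then show ?case by simp
    qed
    show "eventually (\<lambda>n. real n * ln (a n) \<le> real n * (a n - 1)) sequentially"
      using ev
    proof eventually_elim
      case (elim n)
      then show ?case by (intro mult_left_mono ln_le_minus_one) auto
    qed
  qed
  then have "(\<lambda>n. exp (real n * ln (a n))) \<longlonglongrightarrow> exp L" by (rule tendsto_exp)
  moreover have "eventually (\<lambda>n. exp (real n * ln (a n)) = a n ^ n) sequentially"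
    using ev by eventually_elim (simp add: exp_of_nat_mult)
  ultimately show ?thesis by (simp add: tendsto_cong)
qed


lemma (in prob_space) exp_less:
  assumes l: "0 < l" and u: "0 < u"
  and A: "distributed M lborel A (exponential_density l)"
  and B: "distributed M lborel B (exponential_density u)"
  and ind: "indep_var borel A borel B"
  shows "prob {\<omega> \<in> space M. A \<omega> < B \<omega>} = l / (l + u)"
proof -
  have rvA[measurable]: "A \<in> borel_measurable M" using A l by (simp add: exponential_distributed_iff)
  have rvB[measurable]: "B \<in> borel_measurable M" using B u by (simp add: exponential_distributed_iff)
  define PA where "PA = distr M borel A"
  define PB where "PB = distr M borel B"
  interpret PA: prob_space PA unfolding PA_def by (rule prob_space_distr) simp
  interpret PB: prob_space PB unfolding PB_def by (rule prob_space_distr) simp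
  have joint: "PA \<Otimes>\<^sub>M PB = distr M (borel \<Otimes>\<^sub>M borel) (\<lambda>x. (A x, B x))"
    using ind unfolding PA_def PB_def by (simp add: indep_var_distribution_eq)
  define S where "S = {p::real\<times>real. fst p < snd p}"
  have S[measurable]: "S \<in> sets (borel \<Otimes>\<^sub>M borel)"
  proof -
    have "{p \<in> space (borel \<Otimes>\<^sub>M borel). fst p < (snd p::real)} \<in> sets (borel \<Otimes>\<^sub>M borel)"
      by measurable
    then show ?thesis by (simp add: S_def space_pair_measure)
  qed
  have SS: "S \<in> sets (PA \<Otimes>\<^sub>M PB)" using S by (simp add: PA_def PB_def)
  have gm: "(\<lambda>x. emeasure PB (Pair x -` S)) \<in> borel_measurable borel"
    using PB.measurable_emeasure_Pair[OF SS] by (simp add: PA_def)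
  have "emeasure M {\<omega> \<in> space M. A \<omega> < B \<omega>} = emeasure (distr M (borel \<Otimes>\<^sub>M borel) (\<lambda>x. (A x, B x))) S"
  proof -
    have "emeasure (distr M (borel \<Otimes>\<^sub>M borel) (\<lambda>x. (A x, B x))) S = emeasure M ((\<lambda>x. (A x, B x)) -` S \<inter> space M)"
      by (rule emeasure_distr) (simp_all add: S)
    moreover have "(\<lambda>x. (A x, B x)) -` S \<inter> space M = {\<omega> \<in> space M. A \<omega> < B \<omega>}" by (auto simp: S_def)
    ultimately show ?thesis by simp
  qed
  also have "\<dots> = (\<integral>\<^sup>+x. emeasure PB (Pair x -` S) \<partial>PA)"
    unfolding joint[symmetric] by (rule PB.emeasure_pair_measure_alt[OF SS])
  also have "\<dots> = (\<integral>\<^sup>+\<omega>. emeasure PB (Pair (A \<omega>) -` S) \<partial>M)"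
    unfolding PA_def
    by (subst nn_integral_distr) (use gm in simp_all)
  also have "\<dots> = (\<integral>\<^sup>+x. ennreal (exponential_density l x) * emeasure PB (Pair x -` S) \<partial>lborel)"
    by (rule distributed_nn_integral[OF A, symmetric])
       (use gm in simp)
  also have "\<dots> = (\<integral>\<^sup>+x. ennreal (l / (l + u)) * ennreal (exponential_density (l + u) x) \<partial>lborel)"
  proof (rule nn_integral_cong)
    fix x :: real
    show "ennreal (exponential_density l x) * emeasure PB (Pair x -` S) =
          ennreal (l / (l + u)) * ennreal (exponential_density (l + u) x)"
    proof (cases "x < 0")
      case True then show ?thesis by (simp add: exponential_density_def)
    next
      case False
      have "emeasure PB (Pair x -` S) = emeasure M {\<omega> \<in> space M. x < B \<omega>}"
        unfolding PB_def by (subst emeasure_distr) (auto simp: S_def vimage_def Collect_conj_eq intro!: arg_cong[where f="emeasure M"])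
      also have "\<dots> = ennreal (exp (- x * u))"
        using exponential_distributedD_gt[OF B _ u, of x] False
        by (simp add: emeasure_eq_measure)
      finally have e: "emeasure PB (Pair x -` S) = ennreal (exp (- x * u))" .
      have "l * exp (- x * l) * exp (- x * u) = l / (l + u) * ((l + u) * exp (- x * (l + u)))"
      proof -
        have "exp (- x * l) * exp (- x * u) = exp (- x * (l + u))" by (simp add: exp_add[symmetric] algebra_simps)
        then show ?thesis using l u by (simp add: field_simps)
      qed
      then show ?thesis using False l u
        by (simp add: e exponential_density_def ennreal_mult'[symmetric] ennreal_mult[symmetric])
    qed
  qed
  also have "\<dots> = ennreal (l / (l + u)) * (\<integral>\<^sup>+x. ennreal (exponential_density (l + u) x) \<partial>lborel)"
    by (rule nn_integral_cmult) simp
  also have "(\<integral>\<^sup>+x. ennreal (exponential_density (l + u) x) \<partial>lborel) = 1"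
    using nn_integral_erlang_ith_moment[of "l + u" 0 0] l u by simp
  finally have "emeasure M {\<omega> \<in> space M. A \<omega> < B \<omega>} = ennreal (l / (l + u))" by simp
  then show ?thesis using l u by (simp add: emeasure_eq_measure)
qed


lemma frechet_isCont: "0 < c \<Longrightarrow> isCont frechet_cdf c"
proof -
  assume c: "0 < c"
  have "eventually (\<lambda>x. x > 0) (nhds c)" using eventually_nhds_in_open[of "{0<..}" c] c by simp
  then have "eventually (\<lambda>x. frechet_cdf x = exp (- 1 / x)) (nhds c)"
    by eventually_elim (simp add: frechet_cdf_def)
  moreover have "isCont (\<lambda>x. exp (- 1 / x)) c" using c by (intro continuous_intros) auto
  ultimately show ?thesis by (simp add: isCont_cong)
qed

lemma (in prob_space) frechet_facts:
  assumes Zm[measurable]: "Z \<in> borel_measurable M"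
  and cZ: "cdf (distr M borel Z) = frechet_cdf"
  shows frechet_le: "\<And>c. prob {\<omega> \<in> space M. Z \<omega> \<le> c} = frechet_cdf c"
    and frechet_pos: "AE \<omega> in M. 0 < Z \<omega>"
    and frechet_exp: "distributed M lborel (\<lambda>\<omega>. 1 / Z \<omega>) (exponential_density 1)"
proof -
  interpret D: real_distribution "distr M borel Z"
    by standard (auto intro: prob_space_distr)
  show le: "\<And>c. prob {\<omega> \<in> space M. Z \<omega> \<le> c} = frechet_cdf c"
  proof -
    fix c
    have "cdf (distr M borel Z) c = prob (Z -` {..c} \<inter> space M)"
      unfolding cdf_def by (subst measure_distr) auto
    also have "Z -` {..c} \<inter> space M = {\<omega> \<in> space M. Z \<omega> \<le> c}" by auto
    finally show "prob {\<omega> \<in> space M. Z \<omega> \<le> c} = frechet_cdf c" using cZ by simp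
  qed
  have "prob {\<omega> \<in> space M. Z \<omega> \<le> 0} = 0" using le[of 0] by (simp add: frechet_cdf_def)
  then show pos: "AE \<omega> in M. 0 < Z \<omega>"
    by (subst (asm) prob_Collect_eq_0) (auto simp: not_le)
  have eq: "\<And>c. c > 0 \<Longrightarrow> prob {\<omega> \<in> space M. Z \<omega> = c} = 0"
  proof -
    fix c :: real assume c: "c > 0"
    have "measure (distr M borel Z) {c} = 0"
      using frechet_isCont[OF c] cZ by (simp add: D.isCont_cdf[symmetric])
    moreover have "measure (distr M borel Z) {c} = prob (Z -` {c} \<inter> space M)"
      by (subst measure_distr) auto
    moreover have "Z -` {c} \<inter> space M = {\<omega> \<in> space M. Z \<omega> = c}" by auto
    ultimately show "prob {\<omega> \<in> space M. Z \<omega> = c} = 0" by simp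
  qed
  show "distributed M lborel (\<lambda>\<omega>. 1 / Z \<omega>) (exponential_density 1)"
  proof (rule exponential_distributedI)
    fix a :: real assume a: "0 \<le> a"
    have cv: "ennreal (1 - exp (- a * 1)) = 1 - ennreal (exp (- a * 1))"
      using a by (simp add: ennreal_minus ennreal_1[symmetric] del: ennreal_1)
    have "emeasure M {x \<in> space M. 1 / Z x \<le> a} = ennreal (1 - exp (- a * 1))"
    proof (cases "a = 0")
      case True
      have "{x \<in> space M. 1 / Z x \<le> a} = {x \<in> space M. Z x \<le> 0}"
        using True by (auto simp: divide_le_0_iff)
      then show ?thesis using True le[of 0] by (simp add: emeasure_eq_measure frechet_cdf_def)
    next
      case False
      then have a: "a > 0" using a by simp
      have "prob {x \<in> space M. 1 / Z x \<le> a} = prob {x \<in> space M. 1 / a \<le> Z x}"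
        by (rule prob_eq_AE) (use pos a in \<open>auto simp: field_simps\<close>)
      also have "{x \<in> space M. 1 / a \<le> Z x} = space M - ({x \<in> space M. Z x \<le> 1/a} - {x \<in> space M. Z x = 1/a})"
        by auto
      also have "prob \<dots> = 1 - (prob {x \<in> space M. Z x \<le> 1/a} - prob {x \<in> space M. Z x = 1/a})"
        by (subst prob_compl, simp, subst finite_measure_Diff) auto
      also have "\<dots> = 1 - exp (- a)" using eq[of "1/a"] le[of "1/a"] a by (simp add: frechet_cdf_def)
      finally show ?thesis by (simp add: emeasure_eq_measure)
    qed
    then show "emeasure M {x \<in> space M. 1 / Z x \<le> a} = 1 - ennreal (exp (- a * 1))" using cv by simp
  qed simp_all
qed


locale qc = prob_space M for M :: "'a measure" +
  fixes X Y :: "nat \<Rightarrow> 'a \<Rightarrow> real"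
  assumes Xm[measurable]: "\<And>i. X i \<in> borel_measurable M"
    and Ym[measurable]: "\<And>i. Y i \<in> borel_measurable M"
    and ind: "indep_vars (\<lambda>_. borel) (\<lambda>k. case k of Inl i \<Rightarrow> X i | Inr i \<Rightarrow> Y i) UNIV"
    and cX: "\<And>i. cdf (distr M borel (X i)) = frechet_cdf"
    and cY: "\<And>i. cdf (distr M borel (Y i)) = frechet_cdf"
begin

definition W where "W i \<omega> = Y i \<omega> / (X i \<omega> + Y i \<omega>)"

lemma Wm[measurable]: "W i \<in> borel_measurable M"
  unfolding W_def by measurable

lemma indep_pair:
  assumes "a \<noteq> b"
  shows "indep_var borel (\<lambda>\<omega>. (case a of Inl i \<Rightarrow> X i | Inr i \<Rightarrow> Y i) \<omega>)
                   borel (\<lambda>\<omega>. (case b of Inl i \<Rightarrow> X i | Inr i \<Rightarrow> Y i) \<omega>)"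
proof -
  let ?F = "\<lambda>k. case k of Inl i \<Rightarrow> X i | Inr i \<Rightarrow> Y i"
  have "indep_var (PiM {a} (\<lambda>_. borel)) (\<lambda>\<omega>. restrict (\<lambda>k. ?F k \<omega>) {a})
                  (PiM {b} (\<lambda>_. borel)) (\<lambda>\<omega>. restrict (\<lambda>k. ?F k \<omega>) {b})"
    using assms by (intro indep_var_restrict[OF ind]) auto
  then have "indep_var borel ((\<lambda>f. f a) \<circ> (\<lambda>\<omega>. restrict (\<lambda>k. ?F k \<omega>) {a}))
                  borel ((\<lambda>f. f b) \<circ> (\<lambda>\<omega>. restrict (\<lambda>k. ?F k \<omega>) {b}))"
    by (rule indep_var_compose) measurable
  moreover have "(\<lambda>f. f a) \<circ> (\<lambda>\<omega>. restrict (\<lambda>k. ?F k \<omega>) {a}) = (\<lambda>\<omega>. ?F a \<omega>)"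
    "(\<lambda>f. f b) \<circ> (\<lambda>\<omega>. restrict (\<lambda>k. ?F k \<omega>) {b}) = (\<lambda>\<omega>. ?F b \<omega>)"
    by auto
  ultimately show ?thesis by simp
qed

lemma indep_XY: "indep_var borel (X i) borel (Y i)"
  using indep_pair[of "Inl i" "Inr i"] by simp

lemma indep_YX: "indep_var borel (Y i) borel (X i)"
  using indep_pair[of "Inr i" "Inl i"] by simp

lemma indep_W: "indep_vars (\<lambda>_. borel) W UNIV"
proof -
  let ?F = "\<lambda>k. case k of Inl i \<Rightarrow> X i | Inr i \<Rightarrow> Y i"
  let ?K = "\<lambda>j::nat. {Inl j, Inr j} :: (nat + nat) set"
  have "indep_vars (\<lambda>j. PiM (?K j) (\<lambda>_. borel)) (\<lambda>j \<omega>. restrict (\<lambda>k. ?F k \<omega>) (?K j)) UNIV"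
    by (intro indep_vars_restrict[OF ind]) (auto simp: disjoint_family_on_def)
  then have "indep_vars (\<lambda>_. borel) (\<lambda>j \<omega>. (\<lambda>f. f (Inr j) / (f (Inl j) + f (Inr j))) (restrict (\<lambda>k. ?F k \<omega>) (?K j))) UNIV"
    by (rule indep_vars_compose2) measurable
  also have "(\<lambda>j \<omega>. (\<lambda>f. f (Inr j) / (f (Inl j) + f (Inr j))) (restrict (\<lambda>k. ?F k \<omega>) (?K j))) = W"
    by (auto simp: W_def fun_eq_iff)
  finally show ?thesis .
qed

lemma AE_pos: "AE \<omega> in M. \<forall>i. 0 < X i \<omega> \<and> 0 < Y i \<omega>"
  unfolding AE_all_countable
  using frechet_pos[OF Xm cX] frechet_pos[OF Ym cY] by auto

lemma expX: "distributed M lborel (\<lambda>\<omega>. 1 / X i \<omega>) (exponential_density 1)"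
  by (rule frechet_exp[OF Xm cX])
lemma expY: "distributed M lborel (\<lambda>\<omega>. 1 / Y i \<omega>) (exponential_density 1)"
  by (rule frechet_exp[OF Ym cY])

lemma W_less_aux: "0 < w \<Longrightarrow> w < 1 \<Longrightarrow> prob {\<omega>\<in>space M. W i \<omega> < w} = w"
proof -
  assume w: "0 < w" "w < 1"
  define c where "c = w / (1 - w)"
  have c: "c > 0" using w by (simp add: c_def)
  have "prob {\<omega>\<in>space M. W i \<omega> < w} = prob {\<omega>\<in>space M. 1 / X i \<omega> < c * (1 / Y i \<omega>)}"
  proof (rule prob_eq_AE)
    show "AE \<omega> in M. W i \<omega> < w \<longleftrightarrow> 1 / X i \<omega> < c * (1 / Y i \<omega>)"
      using AE_pos
    proof eventually_elim
      case (elim \<omega>)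
      then have p: "0 < X i \<omega>" "0 < Y i \<omega>" by auto
      have "W i \<omega> < w \<longleftrightarrow> Y i \<omega> < w * (X i \<omega> + Y i \<omega>)"
        using p by (simp add: W_def divide_less_eq)
      also have "\<dots> \<longleftrightarrow> (1 - w) * Y i \<omega> < w * X i \<omega>" by (simp add: algebra_simps)
      also have "\<dots> \<longleftrightarrow> 1 / X i \<omega> < c * (1 / Y i \<omega>)"
        using p w unfolding c_def by (simp add: field_simps)
      finally show ?case .
    qed
  qed simp_all
  also have "\<dots> = 1 / (1 + 1 / c)"
  proof (rule exp_less)
    show "distributed M lborel (\<lambda>\<omega>. c * (1 / Y i \<omega>)) (exponential_density (1 / c))"
      using erlang_distributed_mult_const[OF expY c] by simp
    have "indep_var borel ((\<lambda>x. 1 / x) \<circ> X i) borel ((\<lambda>x. c * (1 / x)) \<circ> Y i)"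
      by (rule indep_var_compose[OF indep_XY]) measurable
    then show "indep_var borel (\<lambda>\<omega>. 1 / X i \<omega>) borel (\<lambda>\<omega>. c * (1 / Y i \<omega>))"
      by (simp add: comp_def)
  qed (use c expX in simp_all)
  also have "\<dots> = w" using w by (simp add: c_def field_simps)
  finally show ?thesis .
qed

lemma W_greater_aux: "0 < w \<Longrightarrow> w < 1 \<Longrightarrow> prob {\<omega>\<in>space M. w < W i \<omega>} = 1 - w"
proof -
  assume w: "0 < w" "w < 1"
  define c where "c = (1 - w) / w"
  have c: "c > 0" using w by (simp add: c_def)
  have "prob {\<omega>\<in>space M. w < W i \<omega>} = prob {\<omega>\<in>space M. 1 / Y i \<omega> < c * (1 / X i \<omega>)}"
  proof (rule prob_eq_AE)
    show "AE \<omega> in M. w < W i \<omega> \<longleftrightarrow> 1 / Y i \<omega> < c * (1 / X i \<omega>)"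
      using AE_pos
    proof eventually_elim
      case (elim \<omega>)
      then have p: "0 < X i \<omega>" "0 < Y i \<omega>" by auto
      have "w < W i \<omega> \<longleftrightarrow> w * (X i \<omega> + Y i \<omega>) < Y i \<omega>"
        using p by (simp add: W_def less_divide_eq)
      also have "\<dots> \<longleftrightarrow> w * X i \<omega> < (1 - w) * Y i \<omega>" by (simp add: algebra_simps)
      also have "\<dots> \<longleftrightarrow> 1 / Y i \<omega> < c * (1 / X i \<omega>)"
        using p w unfolding c_def by (simp add: field_simps)
      finally show ?case .
    qed
  qed simp_all
  also have "\<dots> = 1 / (1 + 1 / c)"
  proof (rule exp_less)
    show "distributed M lborel (\<lambda>\<omega>. c * (1 / X i \<omega>)) (exponential_density (1 / c))"
      using erlang_distributed_mult_const[OF expX c] by simp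
    have "indep_var borel ((\<lambda>x. 1 / x) \<circ> Y i) borel ((\<lambda>x. c * (1 / x)) \<circ> X i)"
      by (rule indep_var_compose[OF indep_YX]) measurable
    then show "indep_var borel (\<lambda>\<omega>. 1 / Y i \<omega>) borel (\<lambda>\<omega>. c * (1 / X i \<omega>))"
      by (simp add: comp_def)
  qed (use c expY in simp_all)
  also have "\<dots> = 1 - w" using w by (simp add: c_def field_simps)
  finally show ?thesis .
qed

lemma AE_W: "AE \<omega> in M. \<forall>i. 0 < W i \<omega> \<and> W i \<omega> < 1"
  using AE_pos
proof eventually_elim
  case (elim \<omega>)
  show ?case
  proof
    fix i
    have p: "0 < X i \<omega>" "0 < Y i \<omega>" using elim by auto
    then show "0 < W i \<omega> \<and> W i \<omega> < 1" by (simp add: W_def divide_less_eq)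
  qed
qed

end


context qc begin

lemma W_lt: "0 \<le> w \<Longrightarrow> w \<le> 1 \<Longrightarrow> prob {\<omega>\<in>space M. W i \<omega> < w} = w"
proof -
  assume w: "0 \<le> w" "w \<le> 1"
  consider "w = 0" | "w = 1" | "0 < w \<and> w < 1" using w by linarith
  then show ?thesis
  proof cases
    case 1
    have "AE \<omega> in M. \<not> W i \<omega> < w" using AE_W by eventually_elim (use 1 in \<open>auto simp: not_less less_imp_le\<close>)
    then show ?thesis using 1 by (simp add: prob_eq_0_AE)
  next
    case 2
    have "AE \<omega> in M. W i \<omega> < w" using AE_W by eventually_elim (use 2 in auto)
    moreover have "{\<omega>\<in>space M. W i \<omega> < w} \<in> sets M" by measurable
    ultimately show ?thesis using 2 prob_Collect_eq_1[of "\<lambda>\<omega>. W i \<omega> < w"] by simp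
  qed (auto intro: W_less_aux)
qed

lemma W_le: "0 \<le> w \<Longrightarrow> w \<le> 1 \<Longrightarrow> prob {\<omega>\<in>space M. W i \<omega> \<le> w} = w"
proof -
  assume w: "0 \<le> w" "w \<le> 1"
  consider "w = 0" | "w = 1" | "0 < w \<and> w < 1" using w by linarith
  then show ?thesis
  proof cases
    case 1
    have "AE \<omega> in M. \<not> W i \<omega> \<le> w" using AE_W by eventually_elim (use 1 in \<open>auto simp: not_le\<close>)
    then show ?thesis using 1 by (simp add: prob_eq_0_AE)
  next
    case 2
    have "AE \<omega> in M. W i \<omega> \<le> w" using AE_W by eventually_elim (use 2 in \<open>auto simp: less_imp_le\<close>)
    moreover have "{\<omega>\<in>space M. W i \<omega> \<le> w} \<in> sets M" by measurable
    ultimately show ?thesis using 2 prob_Collect_eq_1[of "\<lambda>\<omega>. W i \<omega> \<le> w"] by simp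
  next
    case 3
    have "{\<omega>\<in>space M. W i \<omega> \<le> w} = space M - {\<omega>\<in>space M. w < W i \<omega>}" by auto
    then have "prob {\<omega>\<in>space M. W i \<omega> \<le> w} = 1 - prob {\<omega>\<in>space M. w < W i \<omega>}"
      by (simp add: prob_compl)
    then show ?thesis using W_greater_aux[of w i] 3 by simp
  qed
qed

lemma W_Ico: "0 \<le> a \<Longrightarrow> a \<le> b \<Longrightarrow> b \<le> 1 \<Longrightarrow> prob {\<omega>\<in>space M. W i \<omega> \<in> {a..<b}} = b - a"
proof -
  assume ab: "0 \<le> a" "a \<le> b" "b \<le> 1"
  have "{\<omega>\<in>space M. W i \<omega> \<in> {a..<b}} = {\<omega>\<in>space M. W i \<omega> < b} - {\<omega>\<in>space M. W i \<omega> < a}" by auto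
  also have "prob \<dots> = prob {\<omega>\<in>space M. W i \<omega> < b} - prob {\<omega>\<in>space M. W i \<omega> < a}"
    using ab by (intro finite_measure_Diff) auto
  finally show ?thesis using ab W_lt[of a i] W_lt[of b i] by simp
qed

lemma W_Icc: "0 \<le> a \<Longrightarrow> a \<le> b \<Longrightarrow> b \<le> 1 \<Longrightarrow> prob {\<omega>\<in>space M. W i \<omega> \<in> {a..b}} = b - a"
proof -
  assume ab: "0 \<le> a" "a \<le> b" "b \<le> 1"
  have "{\<omega>\<in>space M. W i \<omega> \<in> {a..b}} = {\<omega>\<in>space M. W i \<omega> \<le> b} - {\<omega>\<in>space M. W i \<omega> < a}" by auto
  also have "prob \<dots> = prob {\<omega>\<in>space M. W i \<omega> \<le> b} - prob {\<omega>\<in>space M. W i \<omega> < a}"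
    using ab by (intro finite_measure_Diff) auto
  finally show ?thesis using ab W_lt[of a i] W_le[of b i] by simp
qed

lemma W_Ici: "0 \<le> a \<Longrightarrow> a \<le> 1 \<Longrightarrow> prob {\<omega>\<in>space M. W i \<omega> \<in> {a..}} = 1 - a"
proof -
  assume ab: "0 \<le> a" "a \<le> 1"
  have "{\<omega>\<in>space M. W i \<omega> \<in> {a..}} = space M - {\<omega>\<in>space M. W i \<omega> < a}" by auto
  then show ?thesis using ab W_lt[of a i] by (simp add: prob_compl)
qed

lemma box: 
  assumes S: "S \<in> sets borel" and p: "\<And>i. prob {\<omega>\<in>space M. W i \<omega> \<in> S} = p"
  shows "prob {\<omega>\<in>space M. \<forall>i<n. W i \<omega> \<in> S} = p ^ n"
proof (cases "n = 0")
  case True then show ?thesis by (simp add: prob_space)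
next
  case False
  have "prob (\<Inter>i\<in>{..<n}. W i -` S \<inter> space M) = (\<Prod>i\<in>{..<n}. prob (W i -` S \<inter> space M))"
    using False S by (intro indep_varsD[OF indep_W]) auto
  moreover have "(\<Inter>i\<in>{..<n}. W i -` S \<inter> space M) = {\<omega>\<in>space M. \<forall>i<n. W i \<omega> \<in> S}"
    using False by auto
  moreover have "\<And>i. W i -` S \<inter> space M = {\<omega>\<in>space M. W i \<omega> \<in> S}" by auto
  ultimately show ?thesis using p by simp
qed

end


lemma aux1: "0 < (x::real) \<Longrightarrow> 0 < y \<Longrightarrow> 1 / (1 + y / x) = 1 - y / (x + y)"
  by (simp add: field_simps)
lemma aux2: "0 < (x::real) \<Longrightarrow> 0 < y \<Longrightarrow> 1 / (1 + x / y) = y / (x + y)"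
  by (simp add: field_simps)

lemma inv_Max:
  fixes f :: "'i \<Rightarrow> real"
  assumes I: "finite I" "I \<noteq> {}" and pos: "\<And>i. i \<in> I \<Longrightarrow> 0 < f i"
  shows "1 / (1 + Max (f ` I)) = Min ((\<lambda>i. 1 / (1 + f i)) ` I)" and "0 < Max (f ` I)"
proof -
  have "Max (f ` I) \<in> f ` I" using I by (intro Max_in) auto
  then obtain i0 where i0: "i0 \<in> I" "Max (f ` I) = f i0" by auto
  show "0 < Max (f ` I)" using i0 pos by simp
  show "1 / (1 + Max (f ` I)) = Min ((\<lambda>i. 1 / (1 + f i)) ` I)"
  proof (rule Min_eqI[symmetric])
    show "finite ((\<lambda>i. 1 / (1 + f i)) ` I)" using I by simp
    show "1 / (1 + Max (f ` I)) \<in> (\<lambda>i. 1 / (1 + f i)) ` I" using i0 by auto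
    fix y assume "y \<in> (\<lambda>i. 1 / (1 + f i)) ` I"
    then obtain i where i: "i \<in> I" "y = 1 / (1 + f i)" by auto
    have "f i \<le> Max (f ` I)" using I i by simp
    then show "1 / (1 + Max (f ` I)) \<le> y" using i pos[of i] by (simp add: frac_le)
  qed
qed

context qc begin

definition U where "U n \<omega> = max_ratio Y X n \<omega>"
definition V where "V n \<omega> = max_ratio X Y n \<omega>"
definition A where "A n \<omega> = Min ((\<lambda>i. 1 - W i \<omega>) ` {..<n})"
definition B where "B n \<omega> = Min ((\<lambda>i. W i \<omega>) ` {..<n})"

lemma Um[measurable]: "U n \<in> borel_measurable M" unfolding U_def max_ratio_def by measurable
lemma Vm[measurable]: "V n \<in> borel_measurable M" unfolding V_def max_ratio_def by measurable
lemma Am[measurable]: "A n \<in> borel_measurable M" unfolding A_def by measurable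
lemma Bm[measurable]: "B n \<in> borel_measurable M" unfolding B_def by measurable

lemma key_AE: "AE \<omega> in M. \<forall>n>0. 1 / (1 + U n \<omega>) = A n \<omega> \<and> 1 / (1 + V n \<omega>) = B n \<omega> \<and>
                                 0 < U n \<omega> \<and> 0 < V n \<omega>"
  using AE_pos
proof eventually_elim
  case (elim \<omega>)
  show ?case
  proof (intro allI impI)
    fix n :: nat assume n: "0 < n"
    have I: "finite {..<n}" "{..<n} \<noteq> {}" using n by auto
    have p1: "\<And>i. 0 < Y i \<omega> / X i \<omega>" and p2: "\<And>i. 0 < X i \<omega> / Y i \<omega>" using elim by auto
    have e1: "1 / (1 + Y i \<omega> / X i \<omega>) = 1 - W i \<omega>" for i
      unfolding W_def by (rule aux1) (use elim in auto)
    have e2: "1 / (1 + X i \<omega> / Y i \<omega>) = W i \<omega>" for i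
      unfolding W_def by (rule aux2) (use elim in auto)
    have m1: "(\<lambda>i. 1 / (1 + Y i \<omega> / X i \<omega>)) ` {..<n} = (\<lambda>i. 1 - W i \<omega>) ` {..<n}"
      using e1 by simp
    have m2: "(\<lambda>i. 1 / (1 + X i \<omega> / Y i \<omega>)) ` {..<n} = (\<lambda>i. W i \<omega>) ` {..<n}"
      using e2 by simp
    note r1 = inv_Max[OF I, of "\<lambda>i. Y i \<omega> / X i \<omega>", OF p1]
    note r2 = inv_Max[OF I, of "\<lambda>i. X i \<omega> / Y i \<omega>", OF p2]
    have "1 / (1 + U n \<omega>) = A n \<omega>" unfolding U_def A_def max_ratio_def r1(1) m1 ..
    moreover have "1 / (1 + V n \<omega>) = B n \<omega>" unfolding V_def B_def max_ratio_def r2(1) m2 ..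
    moreover have "0 < U n \<omega>" "0 < V n \<omega>" unfolding U_def V_def max_ratio_def using r1(2) r2(2) .
    ultimately show "1 / (1 + U n \<omega>) = A n \<omega> \<and> 1 / (1 + V n \<omega>) = B n \<omega> \<and> 0 < U n \<omega> \<and> 0 < V n \<omega>"
      by blast
  qed
qed

end


lemma inv_le_iff: "0 < (p::real) \<Longrightarrow> 0 < q \<Longrightarrow> (p \<le> q) = (1 / q \<le> 1 / p)"
  by (simp add: field_simps)

context qc begin

lemma AE_all: "AE \<omega> in M. (\<forall>n>0. 1 / (1 + U n \<omega>) = A n \<omega> \<and> 1 / (1 + V n \<omega>) = B n \<omega> \<and>
                                 0 < U n \<omega> \<and> 0 < V n \<omega>) \<and> (\<forall>i. 0 < W i \<omega> \<and> W i \<omega> < 1)"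
  using key_AE AE_W by eventually_elim auto

lemma A_ge: "0 < n \<Longrightarrow> (a \<le> A n \<omega>) = (\<forall>i<n. W i \<omega> \<le> 1 - a)"
  unfolding A_def by (subst Min_ge_iff) (auto simp: algebra_simps)
lemma B_ge: "0 < n \<Longrightarrow> (b \<le> B n \<omega>) = (\<forall>i<n. b \<le> W i \<omega>)"
  unfolding B_def by (subst Min_ge_iff) auto
lemma A_gr: "0 < n \<Longrightarrow> (a < A n \<omega>) = (\<forall>i<n. W i \<omega> < 1 - a)"
  unfolding A_def by (subst Min_gr_iff) (auto simp: algebra_simps)
lemma B_less: "0 < n \<Longrightarrow> (B n \<omega> < b) = (\<exists>i<n. W i \<omega> < b)"
  unfolding B_def by (subst Min_less_iff) auto

lemma part1_eq:
  assumes n: "0 < n" and x: "0 < x" and nx: "1 < real n * x"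
  shows "prob {\<omega>\<in>space M. (U n \<omega> + 1) / real n \<le> x} = (1 - 1 / (real n * x)) ^ n"
proof -
  let ?b = "1 - 1 / (real n * x)"
  have b: "0 \<le> ?b" "?b \<le> 1" using nx x by (auto simp: field_simps)
  have "prob {\<omega>\<in>space M. (U n \<omega> + 1) / real n \<le> x} = prob {\<omega>\<in>space M. \<forall>i<n. W i \<omega> \<in> {0..?b}}"
  proof (rule prob_eq_AE)
    show "AE \<omega> in M. (U n \<omega> + 1) / real n \<le> x \<longleftrightarrow> (\<forall>i<n. W i \<omega> \<in> {0..?b})"
      using AE_all
    proof eventually_elim
      case (elim \<omega>)
      then have e: "1 / (1 + U n \<omega>) = A n \<omega>" "0 < U n \<omega>" and w: "\<And>i. 0 < W i \<omega>" using n by auto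
      have "(U n \<omega> + 1) / real n \<le> x \<longleftrightarrow> 1 + U n \<omega> \<le> real n * x"
        using n by (simp add: divide_le_eq algebra_simps)
      also have "\<dots> \<longleftrightarrow> 1 / (real n * x) \<le> A n \<omega>"
        using e nx by (subst inv_le_iff) auto
      also have "\<dots> \<longleftrightarrow> (\<forall>i<n. W i \<omega> \<le> ?b)" using n by (simp add: A_ge)
      also have "\<dots> \<longleftrightarrow> (\<forall>i<n. W i \<omega> \<in> {0..?b})" using w by (auto simp: less_imp_le)
      finally show ?case .
    qed
  qed simp_all
  also have "\<dots> = (?b - 0) ^ n"
    by (rule box) (simp, rule W_Icc, use b in auto)
  finally show ?thesis by simp
qed

lemma part2_eq:
  assumes n: "0 < n" and x: "0 < x" and y: "0 < y" and nxy: "1 / (real n * x) + 1 / (real n * y) \<le> 1"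
  shows "prob {\<omega>\<in>space M. (U n \<omega> + 1) / real n \<le> x \<and> (V n \<omega> + 1) / real n \<le> y} =
         (1 - 1 / (real n * x) - 1 / (real n * y)) ^ n"
proof -
  let ?a = "1 / (real n * y)"
  let ?b = "1 - 1 / (real n * x)"
  have nx: "1 < real n * x" and ny: "1 < real n * y"
  proof -
    have "0 < 1 / (real n * x)" "0 < 1 / (real n * y)" using n x y by auto
    then have "1 / (real n * x) < 1" "1 / (real n * y) < 1" using nxy by linarith+
    then show "1 < real n * x" "1 < real n * y" using n x y by (auto simp: field_simps)
  qed
  have b: "0 \<le> ?a" "?a \<le> ?b" "?b \<le> 1" using nx ny n x y nxy by (auto simp: field_simps)
  have "prob {\<omega>\<in>space M. (U n \<omega> + 1) / real n \<le> x \<and> (V n \<omega> + 1) / real n \<le> y} =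
        prob {\<omega>\<in>space M. \<forall>i<n. W i \<omega> \<in> {?a..?b}}"
  proof (rule prob_eq_AE)
    show "AE \<omega> in M. ((U n \<omega> + 1) / real n \<le> x \<and> (V n \<omega> + 1) / real n \<le> y) \<longleftrightarrow> (\<forall>i<n. W i \<omega> \<in> {?a..?b})"
      using AE_all
    proof eventually_elim
      case (elim \<omega>)
      then have e: "1 / (1 + U n \<omega>) = A n \<omega>" "0 < U n \<omega>" "1 / (1 + V n \<omega>) = B n \<omega>" "0 < V n \<omega>"
        using n by auto
      have "(U n \<omega> + 1) / real n \<le> x \<longleftrightarrow> 1 + U n \<omega> \<le> real n * x"
        using n by (simp add: divide_le_eq algebra_simps)
      also have "\<dots> \<longleftrightarrow> 1 / (real n * x) \<le> A n \<omega>"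
        using e nx by (subst inv_le_iff) auto
      also have "\<dots> \<longleftrightarrow> (\<forall>i<n. W i \<omega> \<le> ?b)" using n by (simp add: A_ge)
      finally have 1: "(U n \<omega> + 1) / real n \<le> x \<longleftrightarrow> (\<forall>i<n. W i \<omega> \<le> ?b)" .
      have "(V n \<omega> + 1) / real n \<le> y \<longleftrightarrow> 1 + V n \<omega> \<le> real n * y"
        using n by (simp add: divide_le_eq algebra_simps)
      also have "\<dots> \<longleftrightarrow> ?a \<le> B n \<omega>"
        using e ny by (subst inv_le_iff) auto
      also have "\<dots> \<longleftrightarrow> (\<forall>i<n. ?a \<le> W i \<omega>)" using n by (simp add: B_ge)
      finally have 2: "(V n \<omega> + 1) / real n \<le> y \<longleftrightarrow> (\<forall>i<n. ?a \<le> W i \<omega>)" .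
      show ?case unfolding 1 2 by auto
    qed
  qed simp_all
  also have "\<dots> = (?b - ?a) ^ n"
    by (rule box) (simp, rule W_Icc, use b in auto)
  finally show ?thesis by simp
qed

end


lemma pow_diff_bounds:
  fixes a b :: real
  assumes ab: "0 \<le> a" "a \<le> b"
  shows "real (Suc m) * (b - a) * a ^ m \<le> b ^ Suc m - a ^ Suc m"
    and "b ^ Suc m - a ^ Suc m \<le> real (Suc m) * (b - a) * b ^ m"
proof -
  have eq: "b ^ Suc m - a ^ Suc m = (b - a) * (\<Sum>p<Suc m. b ^ p * a ^ (m - p))"
    by (rule diff_power_eq_sum)
  have t1: "a ^ m \<le> b ^ p * a ^ (m - p)" if "p < Suc m" for p
  proof -
    have "a ^ m = a ^ p * a ^ (m - p)" using that by (simp add: power_add[symmetric])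
    also have "\<dots> \<le> b ^ p * a ^ (m - p)" using ab by (intro mult_right_mono power_mono) auto
    finally show ?thesis .
  qed
  have t2: "b ^ p * a ^ (m - p) \<le> b ^ m" if "p < Suc m" for p
  proof -
    have "b ^ p * a ^ (m - p) \<le> b ^ p * b ^ (m - p)" using ab by (intro mult_left_mono power_mono) auto
    also have "\<dots> = b ^ m" using that by (simp add: power_add[symmetric])
    finally show ?thesis .
  qed
  have s1: "real (Suc m) * a ^ m \<le> (\<Sum>p<Suc m. b ^ p * a ^ (m - p))"
    using sum_bounded_below[of "{..<Suc m}" "a ^ m" "\<lambda>p. b ^ p * a ^ (m - p)"] t1 by simp
  have s2: "(\<Sum>p<Suc m. b ^ p * a ^ (m - p)) \<le> real (Suc m) * b ^ m"
    using sum_bounded_above[of "{..<Suc m}" "\<lambda>p. b ^ p * a ^ (m - p)" "b ^ m"] t2 by simp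
  have ba: "0 \<le> b - a" using ab by simp
  show "real (Suc m) * (b - a) * a ^ m \<le> b ^ Suc m - a ^ Suc m"
    unfolding eq using mult_left_mono[OF s1 ba] by (simp add: algebra_simps)
  show "b ^ Suc m - a ^ Suc m \<le> real (Suc m) * (b - a) * b ^ m"
    unfolding eq using mult_left_mono[OF s2 ba] by (simp add: algebra_simps)
qed

lemma pow_lim1:
  fixes a :: "nat \<Rightarrow> real"
  assumes L: "(\<lambda>n. real n * (a n - 1)) \<longlonglongrightarrow> L"
  shows "(\<lambda>n. a n ^ (n - 1)) \<longlonglongrightarrow> exp L"
proof -
  have a1: "(\<lambda>n. a n - 1) \<longlonglongrightarrow> 0"
  proof -
    have "(\<lambda>n. real n * (a n - 1) * inverse (real n)) \<longlonglongrightarrow> L * 0"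
      by (intro tendsto_mult L lim_inverse_n)
    moreover have "eventually (\<lambda>n. real n * (a n - 1) * inverse (real n) = a n - 1) sequentially"
      using eventually_gt_at_top[of 0] by eventually_elim auto
    ultimately show ?thesis by (simp add: tendsto_cong)
  qed
  then have a2: "a \<longlonglongrightarrow> 1"
    using tendsto_add[OF a1 tendsto_const[of 1]] by simp
  then have ev: "eventually (\<lambda>n. a n > 0) sequentially"
    by (rule order_tendstoD) simp
  have "(\<lambda>n. a n ^ n / a n) \<longlonglongrightarrow> exp L / 1"
    by (intro tendsto_divide pow_lim L a2) simp
  moreover have "eventually (\<lambda>n. a n ^ n / a n = a n ^ (n - 1)) sequentially"
    using ev eventually_gt_at_top[of 0]
  proof eventually_elim
    case (elim n)
    then obtain m where "n = Suc m" by (cases n) auto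
    then show ?case using elim by simp
  qed
  ultimately show ?thesis by (simp add: tendsto_cong)
qed

lemma diff_lim:
  fixes a b :: "nat \<Rightarrow> real"
  assumes La: "(\<lambda>n. real n * (a n - 1)) \<longlonglongrightarrow> L"
    and Lb: "(\<lambda>n. real n * (b n - 1)) \<longlonglongrightarrow> L"
    and ab: "eventually (\<lambda>n. 0 \<le> a n \<and> a n \<le> b n) sequentially"
    and K: "(\<lambda>n. real n * real n * (b n - a n)) \<longlonglongrightarrow> K"
  shows "(\<lambda>n. real n * (b n ^ n - a n ^ n)) \<longlonglongrightarrow> K * exp L"
proof (rule tendsto_sandwich)
  show "(\<lambda>n. real n * real n * (b n - a n) * a n ^ (n - 1)) \<longlonglongrightarrow> K * exp L"
    by (intro tendsto_mult K pow_lim1 La)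
  show "(\<lambda>n. real n * real n * (b n - a n) * b n ^ (n - 1)) \<longlonglongrightarrow> K * exp L"
    by (intro tendsto_mult K pow_lim1 Lb)
  show "eventually (\<lambda>n. real n * real n * (b n - a n) * a n ^ (n - 1) \<le> real n * (b n ^ n - a n ^ n)) sequentially"
    using ab eventually_gt_at_top[of 0]
  proof eventually_elim
    case (elim n)
    then obtain m where n: "n = Suc m" by (cases n) auto
    have "real n * (real n * (b n - a n) * a n ^ (n - 1)) \<le> real n * (b n ^ n - a n ^ n)"
      using pow_diff_bounds(1)[of "a n" "b n" m] elim n by (intro mult_left_mono) auto
    then show ?case by (simp add: algebra_simps)
  qed
  show "eventually (\<lambda>n. real n * (b n ^ n - a n ^ n) \<le> real n * real n * (b n - a n) * b n ^ (n - 1)) sequentially"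
    using ab eventually_gt_at_top[of 0]
  proof eventually_elim
    case (elim n)
    then obtain m where n: "n = Suc m" by (cases n) auto
    have "real n * (b n ^ n - a n ^ n) \<le> real n * (real n * (b n - a n) * b n ^ (n - 1))"
      using pow_diff_bounds(2)[of "a n" "b n" m] elim n by (intro mult_left_mono) auto
    then show ?case by (simp add: algebra_simps)
  qed
qed


context qc begin

definition TT where "TT n \<omega> = A n \<omega> + B n \<omega>"
lemma TTm[measurable]: "TT n \<in> borel_measurable M" unfolding TT_def by measurable

definition box where "box n S = {\<omega>\<in>space M. \<forall>i<n. W i \<omega> \<in> S}"
lemma box_sets[measurable]: "S \<in> sets borel \<Longrightarrow> box n S \<in> sets M"
proof -
  assume S: "S \<in> sets borel"
  have *: "{\<omega>\<in>space M. W i \<omega> \<in> S} \<in> sets M" for i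
  proof -
    have "W i -` S \<inter> space M \<in> sets M" using measurable_sets[OF Wm S] .
    moreover have "W i -` S \<inter> space M = {\<omega>\<in>space M. W i \<omega> \<in> S}" by auto
    ultimately show ?thesis by simp
  qed
  show ?thesis
  proof (cases "n = 0")
    case True then show ?thesis by (simp add: box_def)
  next
    case False
    have "{\<omega>\<in>space M. \<forall>i\<in>{..<n}. W i \<omega> \<in> S} \<in> sets M"
      by (rule sets.sets_Collect_finite_All') (use False * in auto)
    then show ?thesis unfolding box_def Ball_def lessThan_iff by assumption
  qed
qed

lemma box_Ico: "0 \<le> a \<Longrightarrow> a \<le> b \<Longrightarrow> b \<le> 1 \<Longrightarrow> prob (box n {a..<b}) = (b - a) ^ n"
  unfolding box_def by (rule box) (simp, rule W_Ico, auto)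
lemma box_Ici: "0 \<le> a \<Longrightarrow> a \<le> 1 \<Longrightarrow> prob (box n {a..}) = (1 - a) ^ n"
  unfolding box_def by (rule box) (simp, rule W_Ici, auto)
lemma box_Iic: "0 \<le> a \<Longrightarrow> a \<le> 1 \<Longrightarrow> prob (box n {..a}) = a ^ n"
proof -
  assume a: "0 \<le> a" "a \<le> 1"
  show ?thesis unfolding box_def
  proof (rule box)
    fix i
    have "{\<omega> \<in> space M. W i \<omega> \<in> {..a}} = {\<omega> \<in> space M. W i \<omega> \<le> a}" by auto
    then show "prob {\<omega> \<in> space M. W i \<omega> \<in> {..a}} = a" using W_le[OF a] by simp
  qed simp
qed

lemma box_diff:
  assumes "0 \<le> a" "a \<le> a'" "a' \<le> b" "b \<le> 1"
  shows "prob (box n {a..<b} - box n {a'..<b}) = (b - a) ^ n - (b - a') ^ n"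
proof -
  have "box n {a'..<b} \<subseteq> box n {a..<b}" using assms by (auto simp: box_def)
  then have "prob (box n {a..<b} - box n {a'..<b}) = prob (box n {a..<b}) - prob (box n {a'..<b})"
    by (intro finite_measure_Diff) auto
  then show ?thesis using assms by (simp add: box_Ico)
qed

lemma grid_lower:
  assumes n: "0 < n" and c: "0 < c" "c < 1" and L: "0 < L" and d: "d = c / real L" and dr: "d \<le> 1 - c"
  shows "real L * ((1 - c) ^ n - (1 - c - d) ^ n) + (1 - c) ^ n \<le> prob {\<omega>\<in>space M. c < TT n \<omega>}"
proof -
  define E where "E j = (if j < L then box n {real j * d..<1 - c + real j * d} - box n {real (Suc j) * d..<1 - c + real j * d}
                         else box n {c..<1})" for j
  have d0: "0 < d" using d c L by simp
  have Ld: "real L * d = c" using d L by simp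
  have jd: "real j * d < c" if "j < L" for j
  proof -
    have "real j * d < real L * d" using that d0 by (intro mult_strict_right_mono) auto
    then show ?thesis using Ld by simp
  qed
  have Ejd: "E j = {\<omega>\<in>space M. real j * d \<le> B n \<omega> \<and> B n \<omega> < real (Suc j) * d \<and> (\<forall>i<n. W i \<omega> < 1 - c + real j * d)}"
    if "j < L" for j
  proof -
    have "E j = box n {real j * d..<1 - c + real j * d} - box n {real (Suc j) * d..<1 - c + real j * d}"
      using that by (simp add: E_def)
    also have "\<dots> = {\<omega>\<in>space M. real j * d \<le> B n \<omega> \<and> B n \<omega> < real (Suc j) * d \<and> (\<forall>i<n. W i \<omega> < 1 - c + real j * d)}"
      using n by (auto simp: box_def B_ge B_less not_less)
    finally show ?thesis .
  qed
  have EL: "E L = {\<omega>\<in>space M. c \<le> B n \<omega> \<and> (\<forall>i<n. W i \<omega> < 1)}"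
    using n by (auto simp: E_def box_def B_ge)
  have sets: "E ` {..L} \<subseteq> sets M"
  proof
    fix e assume "e \<in> E ` {..L}"
    then obtain j where "e = E j" by auto
    then show "e \<in> sets M" unfolding E_def by (auto intro!: box_sets sets.Diff)
  qed
  have disj: "disjoint_family_on E {..L}"
  unfolding disjoint_family_on_def
  proof (intro ballI impI)
    fix j k assume jk: "j \<in> {..L}" "k \<in> {..L}" "j \<noteq> k"
    have *: "E j \<inter> E k = {}" if jk: "j \<le> L" "k \<le> L" "j < k" for j k
    proof -
      have jL: "j < L" using jk by simp
      have le: "real (Suc j) * d \<le> real k * d" using jk d0 by (intro mult_right_mono) auto
      show ?thesis
      proof (cases "k < L")
        case True
        show ?thesis
        proof (rule equalityI, rule subsetI)
          fix \<omega> assume "\<omega> \<in> E j \<inter> E k"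
          then have "B n \<omega> < real (Suc j) * d" "real k * d \<le> B n \<omega>"
            unfolding Ejd[OF jL] Ejd[OF True] by auto
          then show "\<omega> \<in> {}" using le by linarith
        qed simp
      next
        case False
        then have kL: "k = L" using jk by simp
        show ?thesis
        proof (rule equalityI, rule subsetI)
          fix \<omega> assume "\<omega> \<in> E j \<inter> E k"
          then have "B n \<omega> < real (Suc j) * d" "c \<le> B n \<omega>"
            unfolding Ejd[OF jL] kL EL by auto
          then show "\<omega> \<in> {}" using le Ld unfolding kL by linarith
        qed simp
      qed
    qed
    show "E j \<inter> E k = {}"
    proof (cases "j < k")
      case True then show ?thesis using * jk by auto
    next
      case False then have "k < j" using jk(3) by simp
      then have "E k \<inter> E j = {}" using * jk by auto
      then show ?thesis by blast
    qed
  qed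
  have sub: "(\<Union>j\<in>{..L}. E j) \<subseteq> {\<omega>\<in>space M. c < TT n \<omega>}"
  proof
    fix \<omega> assume "\<omega> \<in> (\<Union>j\<in>{..L}. E j)"
    then obtain j where j: "j \<le> L" "\<omega> \<in> E j" by auto
    show "\<omega> \<in> {\<omega>\<in>space M. c < TT n \<omega>}"
    proof (cases "j < L")
      case True
      then have "real j * d \<le> B n \<omega>" "\<forall>i<n. W i \<omega> < 1 - c + real j * d" "\<omega> \<in> space M"
        using j Ejd by auto
      moreover have "c - real j * d < A n \<omega>"
        using calculation(2) n by (subst A_gr) auto
      ultimately show ?thesis by (simp add: TT_def)
    next
      case False
      then have "j = L" using j by simp
      then have "c \<le> B n \<omega>" "\<forall>i<n. W i \<omega> < 1" "\<omega> \<in> space M" using j EL by auto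
      moreover have "0 < A n \<omega>" using calculation(2) n by (subst A_gr) auto
      ultimately show ?thesis by (simp add: TT_def)
    qed
  qed
  have pE: "prob (E j) = (if j < L then (1 - c) ^ n - (1 - c - d) ^ n else (1 - c) ^ n)" for j
  proof (cases "j < L")
    case True
    have "prob (E j) = prob (box n {real j * d..<1 - c + real j * d} - box n {real (Suc j) * d..<1 - c + real j * d})"
      using True by (simp add: E_def)
    also have "\<dots> = (1 - c + real j * d - real j * d) ^ n - (1 - c + real j * d - real (Suc j) * d) ^ n"
      using True jd[OF True] d0 dr c by (intro box_diff) (auto simp: algebra_simps)
    finally show ?thesis using True by (simp add: algebra_simps)
  next
    case False
    then show ?thesis using c by (simp add: E_def box_Ico)
  qed
  have "prob (\<Union>j\<in>{..L}. E j) = (\<Sum>j\<in>{..L}. prob (E j))"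
    by (rule finite_measure_finite_Union) (use sets disj in auto)
  also have "\<dots> = (\<Sum>j<L. prob (E j)) + prob (E L)"
    by (simp add: lessThan_Suc_atMost[symmetric])
  also have "\<dots> = real L * ((1 - c) ^ n - (1 - c - d) ^ n) + (1 - c) ^ n"
    by (simp add: pE)
  finally have eq: "prob (\<Union>j\<in>{..L}. E j) = real L * ((1 - c) ^ n - (1 - c - d) ^ n) + (1 - c) ^ n" .
  have "prob (\<Union>j\<in>{..L}. E j) \<le> prob {\<omega>\<in>space M. c < TT n \<omega>}"
    by (rule finite_measure_mono[OF sub]) simp
  then show ?thesis using eq by simp
qed

end


lemma q_bounds:
  fixes u v :: real
  assumes u: "0 < u" and v: "0 < v" and T: "1 / (1 + u) + 1 / (1 + v) < 1"
  shows "1 / (1 + u) + 1 / (1 + v) \<le> (u + v - 2) / (u * v - 1)"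
    and "(u + v - 2) / (u * v - 1) \<le> (1 / (1 + u) + 1 / (1 + v)) / (1 - (1 / (1 + u) + 1 / (1 + v)))"
proof -
  have P: "0 < (1 + u) * (1 + v)" using u v by simp
  have Teq: "1 / (1 + u) + 1 / (1 + v) = (2 + u + v) / ((1 + u) * (1 + v))"
    using u v by (simp add: field_simps)
  have "(2 + u + v) / ((1 + u) * (1 + v)) < 1" using T Teq by simp
  then have "2 + u + v < (1 + u) * (1 + v)" using P by (simp add: divide_less_eq)
  then have D: "0 < u * v - 1" by (simp add: algebra_simps)
  have sq: "(u + v - 2) * ((1 + u) * (1 + v)) - (2 + u + v) * (u * v - 1) = (u - v)^2"
    by (simp add: algebra_simps power2_eq_square)
  have "(2 + u + v) * (u * v - 1) \<le> (u + v - 2) * ((1 + u) * (1 + v))"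
    using sq by (smt (verit) zero_le_power2)
  then have "(2 + u + v) / ((1 + u) * (1 + v)) \<le> (u + v - 2) / (u * v - 1)"
    using P D by (simp add: divide_le_eq le_divide_eq mult.commute mult.left_commute)
  then show "1 / (1 + u) + 1 / (1 + v) \<le> (u + v - 2) / (u * v - 1)" using Teq by simp
  have "1 - (2 + u + v) / ((1 + u) * (1 + v)) = (u * v - 1) / ((1 + u) * (1 + v))"
    using P by (simp add: field_simps)
  then have "(1 / (1 + u) + 1 / (1 + v)) / (1 - (1 / (1 + u) + 1 / (1 + v))) =
     ((2 + u + v) / ((1 + u) * (1 + v))) / ((u * v - 1) / ((1 + u) * (1 + v)))"
    using Teq by simp
  also have "\<dots> = (2 + u + v) / (u * v - 1)"
    using P D u v by (simp add: divide_divide_eq_left')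
  finally have "(1 / (1 + u) + 1 / (1 + v)) / (1 - (1 / (1 + u) + 1 / (1 + v))) = (2 + u + v) / (u * v - 1)" .
  moreover have "(u + v - 2) / (u * v - 1) \<le> (2 + u + v) / (u * v - 1)"
    using D by (intro divide_right_mono) auto
  ultimately show "(u + v - 2) / (u * v - 1) \<le> (1 / (1 + u) + 1 / (1 + v)) / (1 - (1 / (1 + u) + 1 / (1 + v)))"
    by simp
qed

lemma frac_mono: "(x::real) \<le> y \<Longrightarrow> y < 1 \<Longrightarrow> x / (1 - x) \<le> y / (1 - y)"
proof -
  assume xy: "x \<le> y" "y < 1"
  then have "x * (1 - y) \<le> y * (1 - x)" by (simp add: algebra_simps)
  then show ?thesis using xy by (simp add: divide_le_eq le_divide_eq mult.commute)
qed

context qc begin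

lemma prob_mono_AE:
  assumes "AE x in M. x \<in> S \<longrightarrow> x \<in> R" "S \<in> sets M" "R \<in> sets M"
  shows "prob S \<le> prob R"
  using emeasure_mono_AE[OF assms(1,3)] assms(2,3) by (simp add: emeasure_eq_measure)

lemma quot_eq: "quot_corr X Y n \<omega> = (U n \<omega> + V n \<omega> - 2) / (U n \<omega> * V n \<omega> - 1)"
  by (simp add: quot_corr_def U_def V_def)

lemma Qm[measurable]: "(\<lambda>\<omega>. quot_corr X Y n \<omega>) \<in> borel_measurable M"
  unfolding quot_eq by measurable

lemma AE_TT: "AE \<omega> in M. \<forall>n>0. TT n \<omega> = 1 / (1 + U n \<omega>) + 1 / (1 + V n \<omega>) \<and> 0 < U n \<omega> \<and> 0 < V n \<omega>"
  using key_AE by eventually_elim (auto simp: TT_def)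

lemma part3_upper:
  assumes n: "0 < n"
  shows "prob {\<omega>\<in>space M. real n * quot_corr X Y n \<omega> \<le> t} \<le>
         prob {\<omega>\<in>space M. 1 \<le> TT n \<omega>} + prob {\<omega>\<in>space M. TT n \<omega> \<le> t / real n}"
proof -
  have "prob {\<omega>\<in>space M. real n * quot_corr X Y n \<omega> \<le> t} \<le>
        prob ({\<omega>\<in>space M. 1 \<le> TT n \<omega>} \<union> {\<omega>\<in>space M. TT n \<omega> \<le> t / real n})"
  proof (rule prob_mono_AE)
    show "AE x in M. x \<in> {\<omega>\<in>space M. real n * quot_corr X Y n \<omega> \<le> t} \<longrightarrow>
                     x \<in> {\<omega>\<in>space M. 1 \<le> TT n \<omega>} \<union> {\<omega>\<in>space M. TT n \<omega> \<le> t / real n}"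
      using AE_TT
    proof eventually_elim
      case (elim \<omega>)
      then have e: "TT n \<omega> = 1 / (1 + U n \<omega>) + 1 / (1 + V n \<omega>)" "0 < U n \<omega>" "0 < V n \<omega>" using n by auto
      show ?case
      proof (intro impI)
        assume "\<omega> \<in> {\<omega>\<in>space M. real n * quot_corr X Y n \<omega> \<le> t}"
        then have w: "\<omega> \<in> space M" "real n * quot_corr X Y n \<omega> \<le> t" by auto
        show "\<omega> \<in> {\<omega>\<in>space M. 1 \<le> TT n \<omega>} \<union> {\<omega>\<in>space M. TT n \<omega> \<le> t / real n}"
        proof (cases "TT n \<omega> < 1")
          case True
          have "TT n \<omega> \<le> quot_corr X Y n \<omega>"
            using q_bounds(1)[OF e(2,3)] True e(1) unfolding quot_eq by simp
          then have "real n * TT n \<omega> \<le> t" using w n by (meson mult_left_mono of_nat_0_le_iff order_trans)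
          then have "TT n \<omega> \<le> t / real n" using n by (simp add: le_divide_eq mult.commute)
          then show ?thesis using w by auto
        qed (use w in auto)
      qed
    qed
  qed (auto intro!: sets.Un)
  also have "\<dots> \<le> prob {\<omega>\<in>space M. 1 \<le> TT n \<omega>} + prob {\<omega>\<in>space M. TT n \<omega> \<le> t / real n}"
    by (rule measure_subadditive) (auto simp: emeasure_eq_measure)
  finally show ?thesis .
qed

lemma part3_lower:
  assumes n: "0 < n" and t: "0 < t"
  shows "prob {\<omega>\<in>space M. TT n \<omega> \<le> t / (real n + t)} \<le> prob {\<omega>\<in>space M. real n * quot_corr X Y n \<omega> \<le> t}"
proof (rule prob_mono_AE)
  show "AE x in M. x \<in> {\<omega>\<in>space M. TT n \<omega> \<le> t / (real n + t)} \<longrightarrow> x \<in> {\<omega>\<in>space M. real n * quot_corr X Y n \<omega> \<le> t}"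
    using AE_TT
  proof eventually_elim
    case (elim \<omega>)
    then have e: "TT n \<omega> = 1 / (1 + U n \<omega>) + 1 / (1 + V n \<omega>)" "0 < U n \<omega>" "0 < V n \<omega>" using n by auto
    show ?case
    proof (intro impI)
      assume "\<omega> \<in> {\<omega>\<in>space M. TT n \<omega> \<le> t / (real n + t)}"
      then have w: "\<omega> \<in> space M" "TT n \<omega> \<le> t / (real n + t)" by auto
      have lt: "t / (real n + t) < 1" using n t by (simp add: divide_less_eq)
      then have T1: "TT n \<omega> < 1" using w by linarith
      have "quot_corr X Y n \<omega> \<le> TT n \<omega> / (1 - TT n \<omega>)"
        using q_bounds(2)[OF e(2,3)] T1 e(1) unfolding quot_eq by simp
      also have "\<dots> \<le> (t / (real n + t)) / (1 - t / (real n + t))"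
        by (rule frac_mono[OF w(2) lt])
      also have "\<dots> = t / real n"
      proof -
        have p: "0 < real n + t" using n t by simp
        then have "1 - t / (real n + t) = real n / (real n + t)" by (simp add: field_simps)
        then show ?thesis using p n by simp
      qed
      finally have "real n * quot_corr X Y n \<omega> \<le> real n * (t / real n)"
        by (intro mult_left_mono) auto
      then show "\<omega> \<in> {\<omega>\<in>space M. real n * quot_corr X Y n \<omega> \<le> t}" using w n by simp
    qed
  qed
qed auto

lemma TT_ge1:
  assumes n: "0 < n"
  shows "prob {\<omega>\<in>space M. 1 \<le> TT n \<omega>} \<le> 2 * (1/2) ^ n"
proof -
  have "prob {\<omega>\<in>space M. 1 \<le> TT n \<omega>} \<le> prob (box n {1/2..} \<union> box n {..1/2})"
  proof (rule finite_measure_mono)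
    show "{\<omega>\<in>space M. 1 \<le> TT n \<omega>} \<subseteq> box n {1/2..} \<union> box n {..1/2}"
    proof
      fix \<omega> assume "\<omega> \<in> {\<omega>\<in>space M. 1 \<le> TT n \<omega>}"
      then have w: "\<omega> \<in> space M" "1 \<le> A n \<omega> + B n \<omega>" by (auto simp: TT_def)
      show "\<omega> \<in> box n {1/2..} \<union> box n {..1/2}"
      proof (cases "1/2 \<le> B n \<omega>")
        case True
        then have "\<forall>i<n. 1/2 \<le> W i \<omega>" using B_ge[OF n] by blast
        then show ?thesis using w by (auto simp: box_def)
      next
        case False
        then have "1/2 \<le> A n \<omega>" using w by linarith
        then have "\<forall>i<n. W i \<omega> \<le> 1 - 1/2" using A_ge[OF n] by blast
        then show ?thesis using w by (auto simp: box_def)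
      qed
    qed
  qed (intro sets.Un box_sets; simp)
  also have "\<dots> \<le> prob (box n {1/2..}) + prob (box n {..1/2})"
    by (rule measure_subadditive) (auto intro!: box_sets simp: emeasure_eq_measure)
  also have "\<dots> = 2 * (1/2) ^ n"
    by (simp add: box_Ici box_Iic)
  finally show ?thesis .
qed

end


context qc begin

lemma grid_upper:
  assumes n: "0 < n" and c: "0 < c" "c < 1" and L: "0 < L" and d: "d = c / real L"
  shows "prob {\<omega>\<in>space M. c < TT n \<omega>} \<le> real L * ((1 - c + d) ^ n - (1 - c) ^ n) + (1 - c) ^ n"
proof -
  define F where "F j = (if j < L then box n {real j * d..<1 - c + real (Suc j) * d} - box n {real (Suc j) * d..<1 - c + real (Suc j) * d}
                         else if j = L then box n {c..} else space M - box n {0..})" for j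
  have d0: "0 < d" using d c L by simp
  have Ld: "real L * d = c" using d L by simp
  have jd: "real (Suc j) * d \<le> c" if "j < L" for j
  proof -
    have "real (Suc j) * d \<le> real L * d" using that d0 by (intro mult_right_mono) auto
    then show ?thesis using Ld by simp
  qed
  have Fjd: "F j = {\<omega>\<in>space M. real j * d \<le> B n \<omega> \<and> B n \<omega> < real (Suc j) * d \<and> (\<forall>i<n. W i \<omega> < 1 - c + real (Suc j) * d)}"
    if "j < L" for j
  proof -
    have "F j = box n {real j * d..<1 - c + real (Suc j) * d} - box n {real (Suc j) * d..<1 - c + real (Suc j) * d}"
      using that by (simp add: F_def)
    also have "\<dots> = {\<omega>\<in>space M. real j * d \<le> B n \<omega> \<and> B n \<omega> < real (Suc j) * d \<and> (\<forall>i<n. W i \<omega> < 1 - c + real (Suc j) * d)}"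
      using n by (auto simp: box_def B_ge B_less not_less)
    finally show ?thesis .
  qed
  have FL: "F L = {\<omega>\<in>space M. c \<le> B n \<omega>}"
    using n by (auto simp: F_def box_def B_ge)
  have FSL: "F (Suc L) = {\<omega>\<in>space M. B n \<omega> < 0}"
    using n by (auto simp: F_def box_def B_less not_le)
  have sets: "F ` {..Suc L} \<subseteq> sets M"
  proof
    fix e assume "e \<in> F ` {..Suc L}"
    then obtain j where "e = F j" by auto
    then show "e \<in> sets M" unfolding F_def by (auto intro!: box_sets sets.Diff)
  qed
  have sub: "{\<omega>\<in>space M. c < TT n \<omega>} \<subseteq> (\<Union>j\<in>{..Suc L}. F j)"
  proof
    fix \<omega> assume "\<omega> \<in> {\<omega>\<in>space M. c < TT n \<omega>}"
    then have w: "\<omega> \<in> space M" "c < A n \<omega> + B n \<omega>" by (auto simp: TT_def)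
    show "\<omega> \<in> (\<Union>j\<in>{..Suc L}. F j)"
    proof (cases "c \<le> B n \<omega>")
      case True then show ?thesis using w FL by (intro UN_I[of L]) auto
    next
      case False
      show ?thesis
      proof (cases "B n \<omega> < 0")
        case True then show ?thesis using w FSL by (intro UN_I[of "Suc L"]) auto
      next
        case False2: False
        define r where "r = B n \<omega> / d"
        have r0: "0 \<le> r" using False2 d0 by (simp add: r_def)
        have rL: "r < real L" using False d0 Ld by (simp add: r_def divide_less_eq)
        define j where "j = nat \<lfloor>r\<rfloor>"
        have jr: "real j = of_int \<lfloor>r\<rfloor>" using r0 by (simp add: j_def)
        have j1: "real j \<le> r" using jr by linarith
        have j2: "r < real j + 1" using jr by linarith
        have jL: "j < L" using j1 rL by linarith
        have b1: "real j * d \<le> B n \<omega>" using j1 d0 by (simp add: r_def le_divide_eq)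
        have b2: "B n \<omega> < real (Suc j) * d" using j2 d0 by (simp add: r_def divide_less_eq add.commute)
        have "c - real (Suc j) * d < A n \<omega>" using w b2 by linarith
        then have "\<forall>i<n. W i \<omega> < 1 - (c - real (Suc j) * d)" using A_gr[OF n] by blast
        then have "\<omega> \<in> F j" using w b1 b2 jL by (simp add: Fjd algebra_simps)
        then show ?thesis using jL by (intro UN_I[of j]) auto
      qed
    qed
  qed
  have pF: "prob (F j) = (if j < L then (1 - c + d) ^ n - (1 - c) ^ n else if j = L then (1 - c) ^ n else 0)"
    if "j \<le> Suc L" for j
  proof -
    have "j < L \<or> j = L \<or> j = Suc L" using that by linarith
    then consider "j < L" | "j = L" | "j = Suc L" by blast
    then show ?thesis
    proof cases
      case 1
      have "prob (F j) = prob (box n {real j * d..<1 - c + real (Suc j) * d} - box n {real (Suc j) * d..<1 - c + real (Suc j) * d})"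
        using 1 by (simp add: F_def)
      also have "\<dots> = (1 - c + real (Suc j) * d - real j * d) ^ n - (1 - c + real (Suc j) * d - real (Suc j) * d) ^ n"
        using jd[OF 1] d0 c by (intro box_diff) (auto simp: algebra_simps)
      finally show ?thesis using 1 by (simp add: algebra_simps)
    next
      case 2 then show ?thesis using c by (simp add: F_def box_Ici)
    next
      case 3
      have "prob (F j) = prob (space M - box n {0..})" using 3 by (simp add: F_def)
      also have "\<dots> = 1 - prob (box n {0..})" by (rule prob_compl) (intro box_sets; simp)
      also have "\<dots> = 0" by (simp add: box_Ici)
      finally show ?thesis using 3 by simp
    qed
  qed
  have "prob {\<omega>\<in>space M. c < TT n \<omega>} \<le> prob (\<Union>j\<in>{..Suc L}. F j)"
    by (rule finite_measure_mono[OF sub]) (use sets in auto)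
  also have "\<dots> \<le> (\<Sum>j\<in>{..Suc L}. prob (F j))"
    by (rule finite_measure_subadditive_finite) (use sets in auto)
  also have "\<dots> = (\<Sum>j<L. prob (F j)) + prob (F L) + prob (F (Suc L))"
    by (simp add: lessThan_Suc_atMost[symmetric])
  also have "\<dots> = real L * ((1 - c + d) ^ n - (1 - c) ^ n) + (1 - c) ^ n"
    by (simp add: pF)
  finally show ?thesis .
qed

end


lemma lim_frac0: "0 < (t::real) \<Longrightarrow> (\<lambda>n. t / (real n + t)) \<longlonglongrightarrow> 0"
proof -
  have "filterlim (\<lambda>n. t + real n) at_top sequentially"
    by (rule filterlim_tendsto_add_at_top[OF tendsto_const filterlim_real_sequentially])
  then have "filterlim (\<lambda>n. t + real n) at_infinity sequentially"
    by (rule filterlim_at_top_imp_at_infinity)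
  then have "(\<lambda>n. t / (t + real n)) \<longlonglongrightarrow> 0"
    by (rule tendsto_divide_0[OF tendsto_const])
  then show ?thesis by (simp add: add.commute)
qed

lemma ev_cong_lim:
  assumes "eventually (\<lambda>n. f n = g n) sequentially" "g \<longlonglongrightarrow> l"
  shows "f \<longlonglongrightarrow> l"
  using assms by (simp add: tendsto_cong)

lemma gamma_lower_lim:
  assumes t: "0 < t"
  shows "(\<lambda>n. 1 - (real n * ((1 - t / (real n + t) + t / (real n + t) / real n) ^ n - (1 - t / (real n + t)) ^ n)
                   + (1 - t / (real n + t)) ^ n)) \<longlonglongrightarrow> 1 - (t * exp (- t) + exp (- t))"
proof -
  let ?e = "\<lambda>n. t / (real n + t)"
  have e0: "?e \<longlonglongrightarrow> 0" using lim_frac0[OF t] .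
  have nc: "real n * ?e n = t - t * ?e n" for n
  proof -
    have "real n + t > 0" using t by simp
    then show ?thesis by (simp add: field_simps)
  qed
  have L1: "(\<lambda>n. real n * ((1 - ?e n) - 1)) \<longlonglongrightarrow> - t"
  proof -
    have "(\<lambda>n. - (t - t * ?e n)) \<longlonglongrightarrow> - (t - t * 0)" by (intro tendsto_intros e0)
    moreover have "(\<lambda>n. real n * ((1 - ?e n) - 1)) = (\<lambda>n. - (t - t * ?e n))"
      using nc by (auto simp: fun_eq_iff algebra_simps)
    ultimately show ?thesis by simp
  qed
  have L2: "(\<lambda>n. real n * ((1 - ?e n + ?e n / real n) - 1)) \<longlonglongrightarrow> - t"
  proof (rule ev_cong_lim)
    show "(\<lambda>n. - (t - t * ?e n) + ?e n) \<longlonglongrightarrow> - t"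
      using tendsto_add[OF tendsto_minus[OF tendsto_diff[OF tendsto_const tendsto_mult[OF tendsto_const e0]]] e0, of t t]
      by simp
    show "eventually (\<lambda>n. real n * ((1 - ?e n + ?e n / real n) - 1) = - (t - t * ?e n) + ?e n) sequentially"
      using eventually_gt_at_top[of 0]
    proof eventually_elim
      case (elim n)
      have a: "(1 - ?e n + ?e n / real n) - 1 = - ?e n + ?e n / real n" by simp
      have b: "real n * (?e n / real n) = ?e n" using elim by simp
      have "real n * ((1 - ?e n + ?e n / real n) - 1) = - (real n * ?e n) + real n * (?e n / real n)"
        unfolding a by (simp only: distrib_left mult_minus_right)
      then have "real n * ((1 - ?e n + ?e n / real n) - 1) = - (real n * ?e n) + ?e n"
        unfolding b .
      then show ?case using nc[of n] by simp
    qed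
  qed
  have K: "(\<lambda>n. real n * real n * ((1 - ?e n + ?e n / real n) - (1 - ?e n))) \<longlonglongrightarrow> t"
  proof (rule ev_cong_lim)
    show "(\<lambda>n. t - t * ?e n) \<longlonglongrightarrow> t" using tendsto_diff[OF tendsto_const tendsto_mult[OF tendsto_const e0], of t t] by simp
    show "eventually (\<lambda>n. real n * real n * ((1 - ?e n + ?e n / real n) - (1 - ?e n)) = t - t * ?e n) sequentially"
      using eventually_gt_at_top[of 0]
    proof eventually_elim
      case (elim n)
      have "(1 - ?e n + ?e n / real n) - (1 - ?e n) = ?e n / real n" by simp
      moreover have "real n * real n * (?e n / real n) = real n * ?e n" using elim by simp
      ultimately have "real n * real n * ((1 - ?e n + ?e n / real n) - (1 - ?e n)) = real n * ?e n"
        by simp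
      then show ?case using nc[of n] by simp
    qed
  qed
  have ab: "eventually (\<lambda>n. 0 \<le> 1 - ?e n \<and> 1 - ?e n \<le> 1 - ?e n + ?e n / real n) sequentially"
  proof (rule always_eventually, intro allI conjI)
    fix n
    have "?e n \<le> 1" using t by (simp add: divide_le_eq)
    then show "0 \<le> 1 - ?e n" by simp
    show "1 - ?e n \<le> 1 - ?e n + ?e n / real n" using t by simp
  qed
  have D: "(\<lambda>n. real n * ((1 - ?e n + ?e n / real n) ^ n - (1 - ?e n) ^ n)) \<longlonglongrightarrow> t * exp (- t)"
    by (rule diff_lim[OF L1 L2 ab K])
  have P: "(\<lambda>n. (1 - ?e n) ^ n) \<longlonglongrightarrow> exp (- t)" by (rule pow_lim[OF L1])
  show ?thesis by (intro tendsto_intros D P)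
qed

lemma gamma_upper_lim:
  assumes t: "0 < t"
  shows "(\<lambda>n. 2 * (1/2) ^ n + (1 - (real n * ((1 - t / real n) ^ n - (1 - t / real n - t / real n / real n) ^ n)
                   + (1 - t / real n) ^ n))) \<longlonglongrightarrow> 0 + (1 - (t * exp (- t) + exp (- t)))"
proof -
  let ?e = "\<lambda>n. t / real n"
  have L1: "(\<lambda>n. real n * ((1 - ?e n - ?e n / real n) - 1)) \<longlonglongrightarrow> - t"
  proof (rule ev_cong_lim)
    show "(\<lambda>n. - t - t * inverse (real n)) \<longlonglongrightarrow> - t"
      using tendsto_diff[OF tendsto_const tendsto_mult[OF tendsto_const lim_inverse_n], of "-t" t] by simp
    show "eventually (\<lambda>n. real n * ((1 - ?e n - ?e n / real n) - 1) = - t - t * inverse (real n)) sequentially"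
      using eventually_gt_at_top[of 0] by eventually_elim (simp add: field_simps)
  qed
  have L2: "(\<lambda>n. real n * ((1 - ?e n) - 1)) \<longlonglongrightarrow> - t"
  proof (rule ev_cong_lim)
    show "(\<lambda>n. - t) \<longlonglongrightarrow> - t" by simp
    show "eventually (\<lambda>n. real n * ((1 - ?e n) - 1) = - t) sequentially"
      using eventually_gt_at_top[of 0] by eventually_elim (simp add: field_simps)
  qed
  have K: "(\<lambda>n. real n * real n * ((1 - ?e n) - (1 - ?e n - ?e n / real n))) \<longlonglongrightarrow> t"
  proof (rule ev_cong_lim)
    show "(\<lambda>n. t) \<longlonglongrightarrow> t" by simp
    show "eventually (\<lambda>n. real n * real n * ((1 - ?e n) - (1 - ?e n - ?e n / real n)) = t) sequentially"
      using eventually_gt_at_top[of 0] by eventually_elim (simp add: field_simps)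
  qed
  have ab: "eventually (\<lambda>n. 0 \<le> 1 - ?e n - ?e n / real n \<and> 1 - ?e n - ?e n / real n \<le> 1 - ?e n) sequentially"
  proof -
    obtain N :: nat where N: "2 * t < real N" using reals_Archimedean2 by blast
    show ?thesis using eventually_gt_at_top[of N]
    proof eventually_elim
      case (elim n)
      then have n: "2 * t < real n" "1 \<le> real n" using N t by (auto simp: less_le_trans)
      have "?e n / real n \<le> ?e n" using n t by (simp add: divide_le_eq)
      moreover have "?e n \<le> 1/2" using n t by (simp add: divide_le_eq)
      moreover have "0 \<le> ?e n / real n" using t n by simp
      ultimately show ?case by linarith
    qed
  qed
  have D: "(\<lambda>n. real n * ((1 - ?e n) ^ n - (1 - ?e n - ?e n / real n) ^ n)) \<longlonglongrightarrow> t * exp (- t)"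
    by (rule diff_lim[OF L1 L2 ab K])
  have P: "(\<lambda>n. (1 - ?e n) ^ n) \<longlonglongrightarrow> exp (- t)" by (rule pow_lim[OF L2])
  have H: "(\<lambda>n. 2 * (1/2::real) ^ n) \<longlonglongrightarrow> 2 * 0"
    by (intro tendsto_mult tendsto_const LIMSEQ_power_zero) simp
  show ?thesis using H by (intro tendsto_intros D P) simp
qed


context qc begin

lemma main1: "\<forall>x>0. (\<lambda>n. measure M {\<omega> \<in> space M.
              (max_ratio Y X n \<omega> + 1) / real n \<le> x}) \<longlonglongrightarrow> exp (- 1 / x)"
proof (intro allI impI)
  fix x :: real assume x: "0 < x"
  obtain N :: nat where N: "1 / x < real N" using reals_Archimedean2 by blast
  show "(\<lambda>n. measure M {\<omega> \<in> space M. (max_ratio Y X n \<omega> + 1) / real n \<le> x}) \<longlonglongrightarrow> exp (- 1 / x)"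
  proof (rule ev_cong_lim)
    show "eventually (\<lambda>n. measure M {\<omega> \<in> space M. (max_ratio Y X n \<omega> + 1) / real n \<le> x} =
                          (1 - 1 / (real n * x)) ^ n) sequentially"
      using eventually_gt_at_top[of N]
    proof eventually_elim
      case (elim n)
      have n: "0 < n" using elim by simp
      have "1 / x < real n" using N elim by (meson of_nat_less_iff order.strict_trans)
      then have nx: "1 < real n * x" using x by (simp add: divide_less_eq mult.commute)
      show ?case using part1_eq[OF n x nx] by (simp add: U_def)
    qed
    have "(\<lambda>n. real n * ((1 - 1 / (real n * x)) - 1)) \<longlonglongrightarrow> - 1 / x"
    proof (rule ev_cong_lim)
      show "eventually (\<lambda>n. real n * ((1 - 1 / (real n * x)) - 1) = - 1 / x) sequentially"
        using eventually_gt_at_top[of 0] by eventually_elim (use x in \<open>simp add: field_simps\<close>)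
    qed simp
    then show "(\<lambda>n. (1 - 1 / (real n * x)) ^ n) \<longlonglongrightarrow> exp (- 1 / x)" by (rule pow_lim)
  qed
qed

lemma main2: "\<forall>x>0. \<forall>y>0. (\<lambda>n. measure M {\<omega> \<in> space M.
              (max_ratio Y X n \<omega> + 1) / real n \<le> x \<and>
              (max_ratio X Y n \<omega> + 1) / real n \<le> y}) \<longlonglongrightarrow> exp (- 1 / x - 1 / y)"
proof (intro allI impI)
  fix x y :: real assume x: "0 < x" and y: "0 < y"
  obtain N :: nat where N: "1 / x + 1 / y < real N" using reals_Archimedean2 by blast
  show "(\<lambda>n. measure M {\<omega> \<in> space M. (max_ratio Y X n \<omega> + 1) / real n \<le> x \<and>
              (max_ratio X Y n \<omega> + 1) / real n \<le> y}) \<longlonglongrightarrow> exp (- 1 / x - 1 / y)"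
  proof (rule ev_cong_lim)
    show "eventually (\<lambda>n. measure M {\<omega> \<in> space M. (max_ratio Y X n \<omega> + 1) / real n \<le> x \<and>
              (max_ratio X Y n \<omega> + 1) / real n \<le> y} =
                          (1 - 1 / (real n * x) - 1 / (real n * y)) ^ n) sequentially"
      using eventually_gt_at_top[of N]
    proof eventually_elim
      case (elim n)
      have n: "0 < n" using elim by simp
      have lt: "1 / x + 1 / y < real n" using N elim by (meson of_nat_less_iff order.strict_trans)
      have "1 / (real n * x) + 1 / (real n * y) = (1 / x + 1 / y) / real n" using n by (simp add: field_simps)
      also have "\<dots> \<le> 1" using lt n by (simp add: divide_le_eq)
      finally have nxy: "1 / (real n * x) + 1 / (real n * y) \<le> 1" .
      show ?case using part2_eq[OF n x y nxy] by (simp add: U_def V_def)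
    qed
    have "(\<lambda>n. real n * ((1 - 1 / (real n * x) - 1 / (real n * y)) - 1)) \<longlonglongrightarrow> - 1 / x - 1 / y"
    proof (rule ev_cong_lim)
      show "eventually (\<lambda>n. real n * ((1 - 1 / (real n * x) - 1 / (real n * y)) - 1) = - 1 / x - 1 / y) sequentially"
        using eventually_gt_at_top[of 0] by eventually_elim (use x y in \<open>simp add: field_simps\<close>)
    qed simp
    then show "(\<lambda>n. (1 - 1 / (real n * x) - 1 / (real n * y)) ^ n) \<longlonglongrightarrow> exp (- 1 / x - 1 / y)" by (rule pow_lim)
  qed
qed

lemma cdf_gamma21: "cdf gamma21 t = erlang_CDF 1 1 t"
proof -
  have "gamma21 = density lborel (erlang_density 1 1)"
    unfolding gamma21_def
    by (intro arg_cong[where f="density lborel"] ext) (simp add: gamma21_density_def erlang_density_def)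
  then have "cdf gamma21 t = measure (density lborel (erlang_density 1 1)) {..t}" by (simp add: cdf_def)
  also have "\<dots> = enn2real (ennreal (erlang_CDF 1 1 t))"
    unfolding measure_def by (subst emeasure_erlang_density) auto
  also have "\<dots> = erlang_CDF 1 1 t" by (simp add: erlang_CDF_nonneg)
  finally show ?thesis .
qed

lemma erlang11: "0 \<le> t \<Longrightarrow> erlang_CDF 1 1 t = 1 - (t * exp (- t) + exp (- t))"
  by (simp add: erlang_CDF_def)

lemma main3: "weak_conv_m (\<lambda>n. distr M borel (\<lambda>\<omega>. real n * quot_corr X Y n \<omega>)) gamma21"
  unfolding weak_conv_m_def weak_conv_def
proof (intro allI impI)
  fix t :: real
  let ?P = "\<lambda>n. prob {\<omega>\<in>space M. real n * quot_corr X Y n \<omega> \<le> t}"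
  have cdfn: "cdf (distr M borel (\<lambda>\<omega>. real n * quot_corr X Y n \<omega>)) t = ?P n" for n
  proof -
    have "cdf (distr M borel (\<lambda>\<omega>. real n * quot_corr X Y n \<omega>)) t =
          prob ((\<lambda>\<omega>. real n * quot_corr X Y n \<omega>) -` {..t} \<inter> space M)"
      unfolding cdf_def by (subst measure_distr) auto
    also have "(\<lambda>\<omega>. real n * quot_corr X Y n \<omega>) -` {..t} \<inter> space M = {\<omega>\<in>space M. real n * quot_corr X Y n \<omega> \<le> t}"
      by auto
    finally show ?thesis .
  qed
  show "(\<lambda>n. cdf (distr M borel (\<lambda>\<omega>. real n * quot_corr X Y n \<omega>)) t) \<longlonglongrightarrow> cdf gamma21 t"
    unfolding cdfn cdf_gamma21
  proof (cases "t \<le> 0")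
    case True
    have e0: "erlang_CDF 1 1 t = 0" using True by (cases "t = 0") (auto simp: erlang_CDF_def)
    show "?P \<longlonglongrightarrow> erlang_CDF 1 1 t"
      unfolding e0
    proof (rule tendsto_sandwich)
      show "eventually (\<lambda>n. 0 \<le> ?P n) sequentially" by simp
      show "(\<lambda>n. 0) \<longlonglongrightarrow> (0::real)" by simp
      show "(\<lambda>n. 2 * (1/2::real) ^ n) \<longlonglongrightarrow> 0"
        using tendsto_mult[OF tendsto_const LIMSEQ_power_zero[of "1/2::real"], of 2] by simp
      show "eventually (\<lambda>n. ?P n \<le> 2 * (1/2) ^ n) sequentially"
        using eventually_gt_at_top[of 0]
      proof eventually_elim
        case (elim n)
        note nn = elim
        have z: "prob {\<omega>\<in>space M. TT n \<omega> \<le> t / real n} = 0"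
        proof (rule prob_eq_0_AE)
          show "AE \<omega> in M. \<not> TT n \<omega> \<le> t / real n"
            using AE_TT
          proof eventually_elim
            case (elim \<omega>)
            then have "TT n \<omega> = 1 / (1 + U n \<omega>) + 1 / (1 + V n \<omega>)" "0 < U n \<omega>" "0 < V n \<omega>"
              using nn by auto
            then have "0 < TT n \<omega>" by (simp add: add_pos_pos)
            moreover have "t / real n \<le> 0" using True by (simp add: divide_nonpos_nonneg)
            ultimately show ?case by simp
          qed
        qed
        show ?case using part3_upper[OF nn, of t] TT_ge1[OF nn] z by simp
      qed
    qed
  next
    case False
    then have t: "0 < t" by simp
    show "?P \<longlonglongrightarrow> erlang_CDF 1 1 t"
      unfolding erlang11[OF less_imp_le[OF t]]
    proof (rule tendsto_sandwich)
      show "eventually (\<lambda>n. 1 - (real n * ((1 - t / (real n + t) + t / (real n + t) / real n) ^ n - (1 - t / (real n + t)) ^ n)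
                   + (1 - t / (real n + t)) ^ n) \<le> ?P n) sequentially"
        using eventually_gt_at_top[of 0]
      proof eventually_elim
        case (elim n)
        let ?c = "t / (real n + t)"
        have c: "0 < ?c" "?c < 1" using t elim by (auto simp: divide_less_eq)
        have g: "prob {\<omega>\<in>space M. ?c < TT n \<omega>} \<le> real n * ((1 - ?c + ?c / real n) ^ n - (1 - ?c) ^ n) + (1 - ?c) ^ n"
          by (rule grid_upper[OF elim c]) (use elim in auto)
        have "{\<omega>\<in>space M. TT n \<omega> \<le> ?c} = space M - {\<omega>\<in>space M. ?c < TT n \<omega>}" by auto
        then have "prob {\<omega>\<in>space M. TT n \<omega> \<le> ?c} = 1 - prob {\<omega>\<in>space M. ?c < TT n \<omega>}"
          by (simp add: prob_compl)
        then show ?case using g part3_lower[OF elim t] by simp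
      qed
      show "eventually (\<lambda>n. ?P n \<le> 2 * (1/2) ^ n + (1 - (real n * ((1 - t / real n) ^ n - (1 - t / real n - t / real n / real n) ^ n)
                   + (1 - t / real n) ^ n))) sequentially"
      proof -
        obtain N :: nat where N: "2 * t < real N" using reals_Archimedean2 by blast
        show ?thesis using eventually_gt_at_top[of N]
        proof eventually_elim
          case (elim n)
          then have n: "0 < n" "2 * t < real n" "1 \<le> real n" using N t by auto
          let ?c = "t / real n"
          have c: "0 < ?c" "?c < 1/2" using t n by (auto simp: divide_less_eq)
          have "?c / real n \<le> ?c" using n t by (simp add: divide_le_eq)
          then have dr: "?c / real n \<le> 1 - ?c" using c by linarith
          have g: "real n * ((1 - ?c) ^ n - (1 - ?c - ?c / real n) ^ n) + (1 - ?c) ^ n \<le> prob {\<omega>\<in>space M. ?c < TT n \<omega>}"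
            by (rule grid_lower[OF n(1)]) (use c n dr in auto)
          have "{\<omega>\<in>space M. TT n \<omega> \<le> ?c} = space M - {\<omega>\<in>space M. ?c < TT n \<omega>}" by auto
          then have "prob {\<omega>\<in>space M. TT n \<omega> \<le> ?c} = 1 - prob {\<omega>\<in>space M. ?c < TT n \<omega>}"
            by (simp add: prob_compl)
          then show ?case using g part3_upper[OF n(1), of t] TT_ge1[OF n(1)] by simp
        qed
      qed
      show "(\<lambda>n. 1 - (real n * ((1 - t / (real n + t) + t / (real n + t) / real n) ^ n - (1 - t / (real n + t)) ^ n)
                   + (1 - t / (real n + t)) ^ n)) \<longlonglongrightarrow> 1 - (t * exp (- t) + exp (- t))"
        by (rule gamma_lower_lim[OF t])
      show "(\<lambda>n. 2 * (1/2) ^ n + (1 - (real n * ((1 - t / real n) ^ n - (1 - t / real n - t / real n / real n) ^ n)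
                   + (1 - t / real n) ^ n))) \<longlonglongrightarrow> 1 - (t * exp (- t) + exp (- t))"
        using gamma_upper_lim[OF t] by simp
    qed
  qed
qed

end

theorem theorem3p1:
  fixes M :: "'a measure" and X Y :: "nat \<Rightarrow> 'a \<Rightarrow> real"
  assumes "prob_space M"
    and "\<And>i. X i \<in> borel_measurable M"
    and "\<And>i. Y i \<in> borel_measurable M"
    and "prob_space.indep_vars M (\<lambda>_. borel)
           (\<lambda>k. case k of Inl i \<Rightarrow> X i | Inr i \<Rightarrow> Y i) UNIV"
    and "\<And>i. cdf (distr M borel (X i)) = frechet_cdf"
    and "\<And>i. cdf (distr M borel (Y i)) = frechet_cdf"
  shows "(\<forall>x>0. (\<lambda>n. measure M {\<omega> \<in> space M.
              (max_ratio Y X n \<omega> + 1) / real n \<le> x}) \<longlonglongrightarrow> exp (- 1 / x))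
    \<and> (\<forall>x>0. \<forall>y>0. (\<lambda>n. measure M {\<omega> \<in> space M.
              (max_ratio Y X n \<omega> + 1) / real n \<le> x \<and>
              (max_ratio X Y n \<omega> + 1) / real n \<le> y}) \<longlonglongrightarrow> exp (- 1 / x - 1 / y))
    \<and> weak_conv_m (\<lambda>n. distr M borel (\<lambda>\<omega>. real n * quot_corr X Y n \<omega>)) gamma21"
proof -
  interpret qc M X Y
    by (rule qc.intro[OF assms(1)], unfold_locales) (use assms in auto)
  show ?thesis using main1 main2 main3 by blast
qed


end
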